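(* Let $N = n+1\ge 4$ be even, let $\boldsymbol{\lambda} = (\lambda_1,\dots,\lambda_N) \in \Lambda_N$, let $\mathbf{v}_0 = \mathbf{0}$, $\mathbf{v}_i = \lambda_i(\mathbf{e}_{i-1}-\mathbf{e}_i)$ for $1\le i\le N$, $V_N=\{\mathbf{v}_0,\dots,\mathbf{v}_N\}$, and $\Delta_+(G^{\mathbf{0}}_{\boldsymbol{\lambda}}) = \{\operatorname{conv}(V_N \setminus \{\mathbf{v}_i\}) \mid \lambda_i = \lambda_1\}$. Lift each simplex $T$ of $\Delta_+(G^{\mathbf{0}}_{\boldsymbol{\lambda}})$ to $\Omega_\omega(T) = \operatorname{conv}\{(\mathbf{a},\omega(\mathbf{a})) \mid \mathbf{a} \text{ a vertex of } T\} \subset \mathbb{R}^{n+1}$. If $\lambda_1 = 1$, then the upward-pointing inner normal vectors (with last coordinate $1$) of the simplices in $\Omega_\omega(\Delta_+(G^{\mathbf{0}}_{\boldsymbol{\lambda}}))$ are $\mathbf{x}_{\boldsymbol{\lambda}} = (x_1,\dots,x_{n+1})$ where $x_i = \sum_{j=1}^i \lambda_j$ for $1 \le i < n+1$ and $x_{n+1} = 1$, together with \[ \mathbf{y}_{\boldsymbol{\lambda},j} = \mathbf{x}_{\boldsymbol{\lambda}} + \sum_{k=1}^{j-1}\mathbf{e}_k \] for each $j > 1$ such that $\lambda_j = 1$ (here $\mathbf{e}_k$ denotes the standard basis vectors of $\mathbb{R}^{n+1}$). If $\lambda_1 = -1$, then the upward-pointing inner normal vectors are $\mathbf{x}_{\boldsymbol{\lambda}}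 = \sigma(\mathbf{x}_{-\boldsymbol{\lambda}})$ and $\mathbf{y}_{\boldsymbol{\lambda},j} = \sigma(\mathbf{y}_{-\boldsymbol{\lambda},j})$ for each $j>1$ with $\lambda_j < 0$, where $\sigma:\mathbb{R}^{n+1}\to\mathbb{R}^{n+1}$ is the map negating the first $n$ coordinates.
   Context: $\mathbf{e}_1,\dots,\mathbf{e}_n$ is the standard basis of $\mathbb{R}^n$ with the convention $\mathbf{e}_0 = \mathbf{e}_N = \mathbf{0}$. For even $N$, $\Lambda_N = \{(\lambda_1,\dots,\lambda_N) \in \{-1,1\}^N \mid \sum_i \lambda_i = 0\}$. The cycle graph $C_N$ has vertices $0,\dots,N-1$ and edges $\{0,1\},\{1,2\},\dots,\{N-2,N-1\},\{N-1,0\}$; $S_{C_N} = \{\mathbf{0}\} \cup \{\mathbf{e}_i - \mathbf{e}_j \mid \{i,j\} \text{ an edge of } C_N\}$. The height function $\omega: S_{C_N}\to\mathbb{Z}$ is $\omega(\mathbf{0}) = 0$, $\omega(\pm\mathbf{e}_1) = 2$, and $\omega(\mathbf{a}) = 1$ otherwise. A vector in $\mathbb{R}^{n+1}$ is upward-pointing if its last coordinate is positive. *)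

theory Defs
  imports "HOL-Analysis.Analysis" "HOL-Library.Function_Algebras"
begin

text \<open>Points of R^m are represented as functions nat => real; a point of R^m
  uses the coordinates 1..m (and is 0 elsewhere). We equip functions with the
  pointwise real vector space structure so that the library notions
  convex hull and extreme_point_of (vertices) apply.\<close>

instantiation "fun" :: (type, real_vector) real_vector
begin
definition scaleR_fun :: "real \<Rightarrow> ('a \<Rightarrow> 'b) \<Rightarrow> 'a \<Rightarrow> 'b"
  where "scaleR_fun r f = (\<lambda>x. r *\<^sub>R f x)"
instance
  by standard (simp_all add: scaleR_fun_def fun_eq_iff scaleR_add_right scaleR_add_left)
end

text \<open>Standard basis vector e_k of R^n, n = N - 1, with e_0 = e_N = 0.\<close>
definition ebasis :: "nat \<Rightarrow> nat \<Rightarrow> (nat \<Rightarrow> real)" where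
  "ebasis N k = (if 1 \<le> k \<and> k \<le> N - 1 then (\<lambda>i. if i = k then 1 else 0) else 0)"

definition ebasis1 :: "nat \<Rightarrow> nat \<Rightarrow> (nat \<Rightarrow> real)" where
  "ebasis1 N k = (if 1 \<le> k \<and> k \<le> N then (\<lambda>i. if i = k then 1 else 0) else 0)"

text \<open>Lambda_N: lambda indexed by 1..N (values outside 1..N irrelevant).\<close>
definition Lambda :: "nat \<Rightarrow> (nat \<Rightarrow> int) set" where
  "Lambda N = {lam. (\<forall>i\<in>{1..N}. lam i \<in> {-1, 1}) \<and> (\<Sum>i=1..N. lam i) = 0}"

definition cycle_edge :: "nat \<Rightarrow> nat \<Rightarrow> nat \<Rightarrow> bool" where
  "cycle_edge N i j \<longleftrightarrow> i < N \<and> j < N \<and> (j = (i + 1) mod N \<or> i = (j + 1) mod N)"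

definition S_C :: "nat \<Rightarrow> (nat \<Rightarrow> real) set" where
  "S_C N = {0} \<union> {ebasis N i - ebasis N j | i j. cycle_edge N i j}"

definition omega :: "nat \<Rightarrow> (nat \<Rightarrow> real) \<Rightarrow> real" where
  "omega N a = (if a = 0 then 0 else if a = ebasis N 1 \<or> a = - ebasis N 1 then 2 else 1)"

definition vv :: "nat \<Rightarrow> (nat \<Rightarrow> int) \<Rightarrow> nat \<Rightarrow> (nat \<Rightarrow> real)" where
  "vv N lam i = (if i = 0 then 0 else of_int (lam i) *\<^sub>R (ebasis N (i - 1) - ebasis N i))"

definition VN :: "nat \<Rightarrow> (nat \<Rightarrow> int) \<Rightarrow> (nat \<Rightarrow> real) set" where
  "VN N lam = vv N lam ` {0..N}"

definition Delta_plus :: "nat \<Rightarrow> (nat \<Rightarrow> int) \<Rightarrow> (nat \<Rightarrow> real) set set" where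
  "Delta_plus N lam = {convex hull (VN N lam - {vv N lam i}) | i. i \<in> {1..N} \<and> lam i = lam 1}"

text \<open>Lifting a point a of R^n to (a, omega(a)) in R^(n+1); coordinate n+1 = N.\<close>
definition lift :: "nat \<Rightarrow> (nat \<Rightarrow> real) \<Rightarrow> (nat \<Rightarrow> real)" where
  "lift N a = (\<lambda>i. if i = N then omega N a else a i)"

definition Omega :: "nat \<Rightarrow> (nat \<Rightarrow> real) set \<Rightarrow> (nat \<Rightarrow> real) set" where
  "Omega N T = convex hull {lift N a | a. a extreme_point_of T}"

definition dotN :: "nat \<Rightarrow> (nat \<Rightarrow> real) \<Rightarrow> (nat \<Rightarrow> real) \<Rightarrow> real" where
  "dotN N u p = (\<Sum>i=1..N. u i * p i)"

text \<open>u (a vector of R^(n+1), last coordinate 1, hence upward-pointing) is an inner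
  normal vector of the lifted cell P: u is orthogonal to P, and P lies on the
  lower side, i.e. the linear functional u is minimised on P over all lifted
  points of the configuration S_{C_N}.\<close>
definition upward_inner_normal :: "nat \<Rightarrow> (nat \<Rightarrow> real) set \<Rightarrow> (nat \<Rightarrow> real) \<Rightarrow> bool" where
  "upward_inner_normal N P u \<longleftrightarrow>
     (\<forall>i. i \<notin> {1..N} \<longrightarrow> u i = 0) \<and> u N = 1 \<and>
     (\<forall>p\<in>P. \<forall>q\<in>P. dotN N u p = dotN N u q) \<and>
     (\<forall>p\<in>P. \<forall>a\<in>S_C N. dotN N u p \<le> dotN N u (lift N a))"

definition xvec :: "nat \<Rightarrow> (nat \<Rightarrow> int) \<Rightarrow> (nat \<Rightarrow> real)" where
  "xvec N lam = (\<lambda>i. if 1 \<le> i \<and> i < N then (\<Sum>j=1..i. of_int (lam j)) else if i = N then 1 else 0)"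

definition yvec :: "nat \<Rightarrow> (nat \<Rightarrow> int) \<Rightarrow> nat \<Rightarrow> (nat \<Rightarrow> real)" where
  "yvec N lam j = xvec N lam + (\<Sum>k=1..j-1. ebasis1 N k)"

definition sigma :: "nat \<Rightarrow> (nat \<Rightarrow> real) \<Rightarrow> (nat \<Rightarrow> real)" where
  "sigma N u = (\<lambda>i. if 1 \<le> i \<and> i < N then - u i else u i)"

end

theory Submission imports Defs begin

lemma sum_fun_apply: "(sum f A) x = (\<Sum>a\<in>A. f a x)" for f :: "'b \<Rightarrow> 'c \<Rightarrow> real"
  by (induction A rule: infinite_finite_induct) (auto simp: plus_fun_def zero_fun_def)

lemma ebasis_apply: "ebasis N k x = (if 1 \<le> k \<and> k \<le> N - 1 \<and> x = k then 1 else 0)"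
  by (simp add: ebasis_def zero_fun_def)

lemma ebasis1_apply: "ebasis1 N k x = (if 1 \<le> k \<and> k \<le> N \<and> x = k then 1 else 0)"
  by (simp add: ebasis1_def zero_fun_def)

lemma vv_apply: "vv N lam m x = (if m = 0 then 0 else of_int (lam m) *
   ((if 1 \<le> m - 1 \<and> m - 1 \<le> N - 1 \<and> x = m - 1 then 1 else 0) - (if 1 \<le> m \<and> m \<le> N - 1 \<and> x = m then 1 else 0)))"
  by (simp add: vv_def scaleR_fun_def ebasis_apply zero_fun_def)

lemma dot_add: "dotN N g (x + y) = dotN N g x + dotN N g y"
  by (simp add: dotN_def plus_fun_def algebra_simps sum.distrib)
lemma dot_diff: "dotN N g (x - y) = dotN N g x - dotN N g y"
  by (simp add: dotN_def algebra_simps sum_subtractf)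
lemma dot_scale: "dotN N g (c *\<^sub>R x) = c * dotN N g x"
  by (simp add: dotN_def scaleR_fun_def algebra_simps sum_distrib_left)
lemma dot_uminus: "dotN N g (- x) = - dotN N g x"
  by (simp add: dotN_def sum_negf)
lemma dot_zero: "dotN N g 0 = 0"
  by (simp add: dotN_def zero_fun_def)

definition Uf :: "nat \<Rightarrow> (nat \<Rightarrow> real) \<Rightarrow> nat \<Rightarrow> real" where
  "Uf N g j = (if 1 \<le> j \<and> j \<le> N - 1 then g j else 0)"

lemma dot_ebasis: "dotN N g (ebasis N k) = Uf N g k"
proof -
  have "dotN N g (ebasis N k) = (\<Sum>i\<in>{1..N}. if i = k then (if 1 \<le> k \<and> k \<le> N - 1 then g k else 0) else 0)"
    unfolding dotN_def by (rule sum.cong) (auto simp: ebasis_apply)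
  also have "\<dots> = Uf N g k" by (auto simp: Uf_def)
  finally show ?thesis .
qed

lemma dot_vv: "m \<ge> 1 \<Longrightarrow> dotN N g (vv N lam m) = of_int (lam m) * (Uf N g (m - 1) - Uf N g m)"
  by (simp add: vv_def dot_scale dot_diff dot_ebasis)

lemma vv0: "vv N lam 0 = 0" by (simp add: vv_def)

lemma dot_lift: "a N = 0 \<Longrightarrow> N \<ge> 1 \<Longrightarrow> dotN N u (lift N a) = dotN N u a + u N * omega N a"
proof -
  assume a: "a N = 0" "N \<ge> 1"
  have "dotN N u (lift N a) - dotN N u a = (\<Sum>i\<in>{1..N}. u i * (lift N a i - a i))"
    unfolding dotN_def by (simp add: sum_subtractf algebra_simps)
  also have "\<dots> = (\<Sum>i\<in>{1..N}. if i = N then u N * omega N a else 0)"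
    by (rule sum.cong) (auto simp: lift_def a)
  also have "\<dots> = u N * omega N a" using a by simp
  finally show ?thesis by simp
qed

lemma convex_dot: "convex {p. dotN N g p = c}"
  unfolding convex_def by (simp add: dot_add dot_scale distrib_right[symmetric])

lemma hull_dot: "(\<And>s. s \<in> S \<Longrightarrow> dotN N g s = c) \<Longrightarrow> p \<in> convex hull S \<Longrightarrow> dotN N g p = c"
  using hull_minimal[of S "{p. dotN N g p = c}" convex] convex_dot by blast


locale L =
  fixes N :: nat and lam :: "nat \<Rightarrow> int"
  assumes ev: "even N" and N4: "N \<ge> 4" and lamL: "lam \<in> Lambda N"
begin

lemma lam_pm: "i \<in> {1..N} \<Longrightarrow> lam i = 1 \<or> lam i = -1"
  using lamL by (auto simp: Lambda_def)

lemma lam_sq: "i \<in> {1..N} \<Longrightarrow> real_of_int (lam i) * real_of_int (lam i) = 1"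
  using lam_pm[of i] by auto

lemma lam_nz: "i \<in> {1..N} \<Longrightarrow> real_of_int (lam i) \<noteq> 0"
  using lam_pm[of i] by auto

definition P :: "nat \<Rightarrow> real" where "P m = (\<Sum>j=1..m. real_of_int (lam j))"

lemma P0: "P 0 = 0" by (simp add: P_def)
lemma PSuc: "P (Suc m) = P m + real_of_int (lam (Suc m))" by (simp add: P_def)
lemma PN: "P N = 0"
proof -
  have "(\<Sum>i=1..N. lam i) = 0" using lamL by (simp add: Lambda_def)
  then have "real_of_int (\<Sum>i=1..N. lam i) = 0" by simp
  then show ?thesis unfolding P_def by simp
qed

definition nvec :: "nat \<Rightarrow> nat \<Rightarrow> real" where
  "nvec i = (\<lambda>m. if 1 \<le> m \<and> m < N then P m + (if m < i then real_of_int (lam 1) else 0)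
                 else if m = N then 1 else 0)"

lemma Uf_nvec: "i \<le> N \<Longrightarrow> m \<le> N \<Longrightarrow> Uf N (nvec i) m = P m + (if 1 \<le> m \<and> m < i then real_of_int (lam 1) else 0)"
  using N4 by (cases "m = 0") (auto simp: Uf_def nvec_def P0 PN)

lemma diff_nvec:
  assumes i: "i \<in> {1..N}" "lam i = lam 1" and m: "m \<in> {1..N}"
  shows "Uf N (nvec i) (m - 1) - Uf N (nvec i) m =
     (if m = i then (if i = 1 then - real_of_int (lam 1) else 0)
      else - real_of_int (lam m) * (if m = 1 then 2 else 1))"
proof -
  obtain k where k: "m = Suc k" using m by (cases m) auto
  have a: "Uf N (nvec i) k = P k + (if 1 \<le> k \<and> k < i then real_of_int (lam 1) else 0)"
    using i m k by (intro Uf_nvec) auto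
  have b: "Uf N (nvec i) (Suc k) = P k + real_of_int (lam (Suc k)) + (if Suc k < i then real_of_int (lam 1) else 0)"
    using i m k Uf_nvec[of i "Suc k"] by (simp add: PSuc)
  have li: "lam i = lam 1" by (fact i(2))
  consider "Suc k = i" | "Suc k < i" | "Suc k > i" by linarith
  then show ?thesis
  proof cases
    case 1
    then have ik: "i = Suc k" by simp
    show ?thesis
    proof (cases k)
      case 0
      then show ?thesis using a b unfolding k ik by (simp add: P0)
    next
      case (Suc k')
      have hl: "real_of_int (lam (Suc k)) = real_of_int (lam 1)" using li ik by simp
      show ?thesis using a b Suc hl unfolding k ik by simp
    qed
  next
    case 2
    then show ?thesis unfolding k using a b by (cases k) (simp_all add: P0)
  next
    case 3
    then show ?thesis unfolding k using a b i(1) by (cases k) (simp_all add: P0)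
  qed
qed

lemma e1_nz: "ebasis N 1 \<noteq> 0"
proof
  assume "ebasis N 1 = 0"
  then have "ebasis N 1 1 = 0" by simp
  moreover have "1 \<le> N - 1" using N4 by simp
  ultimately show False by (simp add: ebasis_apply)
qed

lemma omega_ge1: "a \<noteq> 0 \<Longrightarrow> omega N a \<ge> 1" by (simp add: omega_def)

lemma omega_e1: "omega N (ebasis N 1) = 2" "omega N (- ebasis N 1) = 2"
  using e1_nz by (auto simp: omega_def)

lemma vv1: "vv N lam 1 = - real_of_int (lam 1) *\<^sub>R ebasis N 1"
  by (simp add: vv_def ebasis_def)

lemma omega_vv1: "omega N (vv N lam 1) = 2"
proof -
  have "vv N lam 1 = ebasis N 1 \<or> vv N lam 1 = - ebasis N 1"
    using lam_pm[of 1] N4 unfolding vv1 by auto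
  then show ?thesis using omega_e1 by auto
qed

lemma omega_vv:
  assumes m: "m \<in> {2..N}" shows "omega N (vv N lam m) = 1"
proof -
  define c where "c = (if m < N then m else N - 1)"
  have c: "vv N lam m c \<noteq> 0" using m N4 lam_nz[of m] by (auto simp: c_def vv_apply)
  have c2: "ebasis N 1 c = 0" using m N4 by (auto simp: c_def ebasis_apply)
  have "vv N lam m \<noteq> 0" using c by auto
  moreover have "vv N lam m \<noteq> ebasis N 1" using c c2 by metis
  moreover have "vv N lam m \<noteq> - ebasis N 1" using c c2 by (metis neg_equal_0_iff_equal uminus_apply)
  ultimately show ?thesis by (simp add: omega_def)
qed

lemma vvN: "vv N lam m N = 0"
proof -
  have "\<not> N \<le> N - 1" using N4 by simp
  then have "\<And>k. ebasis N k N = 0" by (auto simp: ebasis_apply)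
  then show ?thesis by (simp add: vv_def scaleR_fun_def)
qed

lemma dot_lift_vv: "dotN N u (lift N (vv N lam m)) = dotN N u (vv N lam m) + u N * omega N (vv N lam m)"
  using dot_lift[of "vv N lam m" N u] vvN N4 by simp

lemma lift0: "lift N 0 = 0" by (auto simp: lift_def omega_def)


lemma vv_neq_aux: assumes "a < b" "b \<le> N" shows "vv N lam a \<noteq> vv N lam b"
proof -
  have ne: "\<And>c. vv N lam a c \<noteq> vv N lam b c \<Longrightarrow> ?thesis" by metis
  have nzb: "real_of_int (lam b) \<noteq> 0" using assms lam_nz[of b] by auto
  show ?thesis
  proof (cases "a = 0")
    case True
    show ?thesis
    proof (rule ne[of "if b < N then b else N - 1"])
      show "vv N lam a (if b < N then b else N - 1) \<noteq> vv N lam b (if b < N then b else N - 1)"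
        using True assms N4 nzb by (auto simp: vv_apply)
    qed
  next
    case False
    have nza: "real_of_int (lam a) \<noteq> 0" using assms False lam_nz[of a] by auto
    consider "b \<noteq> Suc a" | "b = Suc a" "a \<ge> 2" | "a = 1" "b = 2" using False assms by linarith
    then show ?thesis
    proof cases
      case 1
      show ?thesis by (rule ne[of a]) (use 1 False assms nza in \<open>auto simp: vv_apply\<close>)
    next
      case 2
      show ?thesis by (rule ne[of "a - 1"]) (use 2 False assms nza in \<open>auto simp: vv_apply\<close>)
    next
      case 3
      show ?thesis by (rule ne[of 2]) (use 3 N4 nzb in \<open>auto simp: vv_apply\<close>)
    qed
  qed
qed

lemma vv_inj: "a \<le> N \<Longrightarrow> b \<le> N \<Longrightarrow> vv N lam a = vv N lam b \<Longrightarrow> a = b"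
  using vv_neq_aux[of a b] vv_neq_aux[of b a] by (metis linorder_neqE_nat)


lemma Uf_eq: "x \<le> N \<Longrightarrow> g 0 = 0 \<Longrightarrow> g N = 0 \<Longrightarrow> Uf N g x = g x"
  by (cases "x = 0"; cases "x = N") (auto simp: Uf_def)

lemma dot_sep0: assumes "j \<in> {1..N}" shows "dotN N (\<lambda>x. - P x) (vv N lam j) = 1"
proof -
  obtain k where k: "j = Suc k" using assms by (cases j) auto
  have "dotN N (\<lambda>x. - P x) (vv N lam j) = real_of_int (lam j) * (- P k + P (Suc k))"
    using assms k by (simp add: dot_vv Uf_eq P0 PN)
  also have "\<dots> = real_of_int (lam j) * real_of_int (lam j)" using k by (simp add: PSuc)
  also have "\<dots> = 1" using lam_sq assms by simp
  finally show ?thesis .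
qed

lemma dot_block:
  assumes pq: "p < q" "1 \<le> p" "q \<le> N" and j: "j \<in> {1..N}"
  shows "dotN N (\<lambda>x. if p \<le> x \<and> x < q then 1 else 0) (vv N lam j) =
    (if j = p then - real_of_int (lam p) else if j = q then real_of_int (lam q) else 0)"
proof -
  let ?g = "(\<lambda>x. if p \<le> x \<and> x < q then 1 else 0) :: nat \<Rightarrow> real"
  have u1: "Uf N ?g (j - 1) = ?g (j - 1)" by (rule Uf_eq) (use j pq in auto)
  have u2: "Uf N ?g j = ?g j" by (rule Uf_eq) (use j pq in auto)
  have "dotN N ?g (vv N lam j) = real_of_int (lam j) * (?g (j - 1) - ?g j)"
    using j dot_vv[of j N ?g lam] u1 u2 by simp
  then show ?thesis using pq j by auto
qed

lemma extreme_vv: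
  assumes i: "i \<in> {1..N}" and m: "m \<le> N" "m \<noteq> i"
  shows "vv N lam m extreme_point_of convex hull (VN N lam - {vv N lam i})"
proof -
  define S where "S = VN N lam - {vv N lam i} - {vv N lam m}"
  have sub: "S \<subseteq> vv N lam ` ({0..N} - {i, m})" unfolding S_def VN_def by auto
  have fin: "finite S" using sub finite_subset by blast
  have notin: "vv N lam m \<notin> convex hull S"
  proof (cases "m = 0")
    case True
    have "\<And>s. s \<in> S \<Longrightarrow> dotN N (\<lambda>x. - P x) s = 1"
    proof -
      fix s assume "s \<in> S"
      then obtain j where "j \<in> {0..N} - {i, m}" "s = vv N lam j" using sub by blast
      then show "dotN N (\<lambda>x. - P x) s = 1" using True dot_sep0[of j] by auto
    qed
    moreover have "dotN N (\<lambda>x. - P x) (vv N lam m) = 0" using True by (simp add: vv0 dot_zero)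
    ultimately show ?thesis using hull_dot[of S N "\<lambda>x. - P x" 1] by force
  next
    case False
    define p where "p = min i m"
    define q where "q = max i m"
    have pq: "p < q" "1 \<le> p" "q \<le> N" using i m False by (auto simp: p_def q_def)
    have mpq: "m = p \<or> m = q" and ipq: "i = p \<or> i = q" by (auto simp: p_def q_def)
    have "\<And>s. s \<in> S \<Longrightarrow> dotN N (\<lambda>x. if p \<le> x \<and> x < q then 1 else 0) s = 0"
    proof -
      fix s assume "s \<in> S"
      then obtain j where j: "j \<in> {0..N} - {i, m}" "s = vv N lam j" using sub by blast
      show "dotN N (\<lambda>x. if p \<le> x \<and> x < q then 1 else 0) s = 0"
      proof (cases "j = 0")
        case True then show ?thesis using j by (simp add: vv0 dot_zero)
      next
        case False
        then have "j \<noteq> p" "j \<noteq> q" using j mpq ipq False i m by (auto simp: p_def q_def)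
        then show ?thesis using j False dot_block[OF pq, of j] by auto
      qed
    qed
    moreover have "dotN N (\<lambda>x. if p \<le> x \<and> x < q then 1 else 0) (vv N lam m) \<noteq> 0"
      using dot_block[OF pq, of m] mpq pq lam_nz[of p] lam_nz[of q] m False by auto
    ultimately show ?thesis using hull_dot[of S N "\<lambda>x. if p \<le> x \<and> x < q then 1 else 0" 0] by force
  qed
  have neq: "vv N lam m \<noteq> vv N lam i" using vv_inj[of m i] m i by auto
  have ins: "insert (vv N lam m) S = VN N lam - {vv N lam i}"
    using neq m unfolding S_def VN_def by auto
  show ?thesis using extreme_point_of_convex_hull_insert[OF fin notin] ins by simp
qed


lemma nvecN: "nvec i N = 1" using N4 by (simp add: nvec_def)

lemma ebasis0: "ebasis N 0 = 0" by (simp add: ebasis_def)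
lemma ebasisN: "ebasis N N = 0" using N4 by (simp add: ebasis_def)
lemma ebasis_N: "ebasis N k N = 0"
proof -
  have "\<not> N \<le> N - 1" using N4 by simp
  then show ?thesis by (auto simp: ebasis_apply)
qed

lemma dot_lift_vv_nvec:
  assumes i: "i \<in> {1..N}" "lam i = lam 1" and m: "m \<le> N" "m \<noteq> i"
  shows "dotN N (nvec i) (lift N (vv N lam m)) = 0"
proof (cases "m = 0")
  case True
  then show ?thesis by (simp add: vv0 lift0 dot_zero)
next
  case False
  have d: "Uf N (nvec i) (m - 1) - Uf N (nvec i) m = - real_of_int (lam m) * (if m = 1 then 2 else 1)"
    using diff_nvec[OF i, of m] m False by auto
  have sq: "real_of_int (lam m) * real_of_int (lam m) = 1" using lam_sq[of m] m False by auto
  have om: "omega N (vv N lam m) = (if m = 1 then 2 else 1)"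
    using omega_vv1 omega_vv[of m] m False by auto
  have "dotN N (nvec i) (lift N (vv N lam m)) =
     real_of_int (lam m) * (Uf N (nvec i) (m - 1) - Uf N (nvec i) m) + omega N (vv N lam m)"
    using False dot_lift_vv[of "nvec i" m] dot_vv[of m N "nvec i" lam] nvecN by simp
  also have "\<dots> =
     real_of_int (lam m) * (- real_of_int (lam m) * (if m = 1 then 2 else 1)) + (if m = 1 then 2 else 1)"
    by (simp only: d om)
  also have "\<dots> = 0" using sq by (simp add: algebra_simps)
  finally show ?thesis .
qed

lemma S_C_cases:
  assumes "a \<in> S_C N"
  shows "a = 0 \<or> (\<exists>m\<in>{1..N}. a = ebasis N (m - 1) - ebasis N m \<or> a = ebasis N m - ebasis N (m - 1))"
proof -
  have e0N: "ebasis N 0 = ebasis N N" by (simp add: ebasis0 ebasisN)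
  { fix p q assume e: "cycle_edge N p q" and a: "a = ebasis N p - ebasis N q"
    have "\<exists>m\<in>{1..N}. a = ebasis N (m - 1) - ebasis N m \<or> a = ebasis N m - ebasis N (m - 1)"
    proof (cases "q = (p + 1) mod N")
      case True
      show ?thesis
      proof (cases "p + 1 < N")
        case True
        then show ?thesis using \<open>q = (p + 1) mod N\<close> a by (intro bexI[of _ "p + 1"]) auto
      next
        case False
        then have "p + 1 = N" using e by (auto simp: cycle_edge_def)
        then have "p = N - 1" "q = 0" using \<open>q = (p + 1) mod N\<close> by auto
        then show ?thesis using a e0N N4 by (intro bexI[of _ N]) auto
      qed
    next
      case False
      then have pq: "p = (q + 1) mod N" using e by (auto simp: cycle_edge_def)
      show ?thesis
      proof (cases "q + 1 < N")
        case True
        then show ?thesis using pq a by (intro bexI[of _ "q + 1"]) auto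
      next
        case False
        then have "q + 1 = N" using e by (auto simp: cycle_edge_def)
        then have "q = N - 1" "p = 0" using pq by auto
        then show ?thesis using a e0N N4 by (intro bexI[of _ N]) auto
      qed
    qed }
  then show ?thesis using assms unfolding S_C_def by blast
qed


lemma absD:
  assumes i: "i \<in> {1..N}" "lam i = lam 1" and m: "m \<in> {1..N}"
  shows "\<bar>Uf N (nvec i) (m - 1) - Uf N (nvec i) m\<bar> \<le> (if m = 1 then 2 else 1)"
proof -
  have p1: "\<bar>real_of_int (lam 1)\<bar> = 1" using lam_pm[of 1] N4 by auto
  have pm: "\<bar>real_of_int (lam m)\<bar> = 1" using lam_pm[of m] m by auto
  show ?thesis using diff_nvec[OF i m] p1 pm by (auto simp: abs_mult)
qed

lemma lower:
  assumes i: "i \<in> {1..N}" "lam i = lam 1" and a: "a \<in> S_C N"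
  shows "dotN N (nvec i) (lift N a) \<ge> 0"
proof (cases "a = 0")
  case True
  then show ?thesis by (simp add: lift0 dot_zero)
next
  case False
  then obtain m where m: "m \<in> {1..N}" and
    am: "a = ebasis N (m - 1) - ebasis N m \<or> a = ebasis N m - ebasis N (m - 1)"
    using S_C_cases[OF a] by blast
  define D where "D = Uf N (nvec i) (m - 1) - Uf N (nvec i) m"
  have aN: "a N = 0" using am by (auto simp: ebasis_N)
  have da: "dotN N (nvec i) a = D \<or> dotN N (nvec i) a = - D"
    using am by (auto simp: D_def dot_diff dot_ebasis)
  have dl: "dotN N (nvec i) (lift N a) = dotN N (nvec i) a + omega N a"
    using dot_lift[of a N "nvec i"] aN N4 nvecN by simp
  have om1: "omega N a \<ge> 1" using False by (rule omega_ge1)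
  show ?thesis
  proof (cases "m = 1")
    case True
    then have "a = - ebasis N 1 \<or> a = ebasis N 1" using am by (simp add: ebasis0)
    then have "omega N a = 2" using omega_e1 by auto
    moreover have "\<bar>D\<bar> \<le> 2" using absD[OF i m] True by (simp add: D_def)
    ultimately show ?thesis using da dl by auto
  next
    case False
    have "\<bar>D\<bar> \<le> 1" using absD[OF i m] False by (simp add: D_def)
    then show ?thesis using da dl om1 by auto
  qed
qed

lemma nvec_normal:
  assumes i: "i \<in> {1..N}" "lam i = lam 1"
  shows "upward_inner_normal N (Omega N (convex hull (VN N lam - {vv N lam i}))) (nvec i)"
proof -
  let ?T = "convex hull (VN N lam - {vv N lam i})"
  have z: "dotN N (nvec i) p = 0" if p: "p \<in> Omega N ?T" for p
  proof -
    have "dotN N (nvec i) s = 0" if s: "s \<in> {lift N a | a. a extreme_point_of ?T}" for s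
    proof -
      obtain a where a: "s = lift N a" "a extreme_point_of ?T" using s by blast
      then have "a \<in> VN N lam - {vv N lam i}" using extreme_point_of_convex_hull by blast
      then obtain m where "m \<le> N" "a = vv N lam m" "m \<noteq> i" unfolding VN_def by force
      then show ?thesis using dot_lift_vv_nvec[OF i] a by auto
    qed
    then show ?thesis using hull_dot p unfolding Omega_def by blast
  qed
  show ?thesis unfolding upward_inner_normal_def
  proof (intro conjI ballI allI impI)
    fix x :: nat assume "x \<notin> {1..N}" then show "nvec i x = 0" using N4 by (auto simp: nvec_def)
  next
    show "nvec i N = 1" by (rule nvecN)
  next
    fix p q assume "p \<in> Omega N ?T" "q \<in> Omega N ?T"
    then show "dotN N (nvec i) p = dotN N (nvec i) q" using z by simp
  next
    fix p a assume "p \<in> Omega N ?T" "a \<in> S_C N"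
    then show "dotN N (nvec i) p \<le> dotN N (nvec i) (lift N a)" using z lower[OF i] by simp
  qed
qed


lemma solve_l: "(l::real) * l = 1 \<Longrightarrow> l * x + c = 0 \<Longrightarrow> x = - l * c"
proof -
  assume a: "l * l = 1" "l * x + c = 0"
  have h: "l * x = - c" using a(2) by linarith
  have "x = (l * l) * x" using a(1) by simp
  also have "\<dots> = l * (l * x)" by simp
  also have "\<dots> = l * (- c)" using h by simp
  finally show ?thesis by simp
qed

lemma normal_unique:
  assumes i: "i \<in> {1..N}" "lam i = lam 1"
    and u: "upward_inner_normal N (Omega N (convex hull (VN N lam - {vv N lam i}))) u"
  shows "u = nvec i"
proof -
  let ?T = "convex hull (VN N lam - {vv N lam i})"
  have u': "(\<forall>i. i \<notin> {1..N} \<longrightarrow> u i = 0) \<and> u N = 1 \<and>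
     (\<forall>p\<in>Omega N ?T. \<forall>q\<in>Omega N ?T. dotN N u p = dotN N u q)"
    using u unfolding upward_inner_normal_def by blast
  have out: "\<And>x. x \<notin> {1..N} \<Longrightarrow> u x = 0" using u' by blast
  have uN: "u N = 1" using u' by blast
  have const: "\<And>p q. p \<in> Omega N ?T \<Longrightarrow> q \<in> Omega N ?T \<Longrightarrow> dotN N u p = dotN N u q"
    using u' by blast
  have inO: "lift N (vv N lam m) \<in> Omega N ?T" if "m \<le> N" "m \<noteq> i" for m
  proof -
    have "lift N (vv N lam m) \<in> {lift N a | a. a extreme_point_of ?T}"
      using extreme_vv[OF i(1) that] by blast
    then show ?thesis unfolding Omega_def by (rule hull_inc)
  qed
  have z: "dotN N u (lift N (vv N lam m)) = 0" if "m \<le> N" "m \<noteq> i" for m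
  proof -
    have "0 \<noteq> i" using i(1) by auto
    then have "dotN N u (lift N (vv N lam m)) = dotN N u (lift N (vv N lam 0))"
      using const inO that by auto
    then show ?thesis by (simp add: vv0 lift0 dot_zero)
  qed
  define U where "U = Uf N u"
  define V where "V = Uf N (nvec i)"
  have E: "U (m - 1) - U m = V (m - 1) - V m" if m: "m \<in> {1..N}" "m \<noteq> i" for m
  proof -
    have om: "omega N (vv N lam m) = (if m = 1 then 2 else 1)"
      using omega_vv1 omega_vv[of m] m by auto
    have "real_of_int (lam m) * (U (m - 1) - U m) + (if m = 1 then 2 else 1) = 0"
      using z[of m] m dot_lift_vv[of u m] dot_vv[of m N u lam] uN om by (simp add: U_def)
    then have "U (m - 1) - U m = - real_of_int (lam m) * (if m = 1 then 2 else 1)"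
      using solve_l[of "real_of_int (lam m)"] lam_sq[of m] m by blast
    also have "\<dots> = V (m - 1) - V m" using diff_nvec[OF i m(1)] m by (simp add: V_def)
    finally show ?thesis .
  qed
  have up: "m < i \<longrightarrow> U m = V m" for m
  proof (induction m)
    case 0 then show ?case by (simp add: U_def V_def Uf_def)
  next
    case (Suc m)
    show ?case
    proof
      assume "Suc m < i"
      then have "U m = V m" using Suc by simp
      moreover have "U (Suc m - 1) - U (Suc m) = V (Suc m - 1) - V (Suc m)"
        using E[of "Suc m"] \<open>Suc m < i\<close> i(1) by auto
      ultimately show "U (Suc m) = V (Suc m)" by simp
    qed
  qed
  have down: "d \<le> N - i \<longrightarrow> U (N - d) = V (N - d)" for d
  proof (induction d)
    case 0 then show ?case using N4 by (simp add: U_def V_def Uf_def)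
  next
    case (Suc d)
    show ?case
    proof
      assume d: "Suc d \<le> N - i"
      then have h1: "U (N - d) = V (N - d)" using Suc by simp
      have h2: "U (N - d - 1) - U (N - d) = V (N - d - 1) - V (N - d)"
        by (rule E) (use d i(1) in auto)
      have e: "N - Suc d = N - d - 1" by simp
      show "U (N - Suc d) = V (N - Suc d)" unfolding e using h1 h2 by linarith
    qed
  qed
  have UV: "U m = V m" if "m \<le> N" for m
  proof (cases "m < i")
    case True then show ?thesis using up by simp
  next
    case False
    then have "N - m \<le> N - i" "N - (N - m) = m" using that by auto
    then show ?thesis using down[of "N - m"] by simp
  qed
  show ?thesis
  proof
    fix x
    show "u x = nvec i x"
    proof (cases "1 \<le> x \<and> x < N")
      case True
      then have "U x = V x" using UV by simp
      moreover have "U x = u x" "V x = nvec i x" using True by (auto simp: U_def V_def Uf_def)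
      ultimately show ?thesis by simp
    next
      case False
      then show ?thesis using out[of x] uN nvecN by (cases "x = N") (auto simp: nvec_def)
    qed
  qed
qed


lemma lhs_eq: "{u. \<exists>T\<in>Delta_plus N lam. upward_inner_normal N (Omega N T) u} = nvec ` {i \<in> {1..N}. lam i = lam 1}"
proof (intro set_eqI iffI)
  fix u assume "u \<in> {u. \<exists>T\<in>Delta_plus N lam. upward_inner_normal N (Omega N T) u}"
  then obtain i where i: "i \<in> {1..N}" "lam i = lam 1"
    and u: "upward_inner_normal N (Omega N (convex hull (VN N lam - {vv N lam i}))) u"
    unfolding Delta_plus_def by blast
  then show "u \<in> nvec ` {i \<in> {1..N}. lam i = lam 1}" using normal_unique[OF i u] by blast
next
  fix u assume "u \<in> nvec ` {i \<in> {1..N}. lam i = lam 1}"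
  then obtain i where i: "i \<in> {1..N}" "lam i = lam 1" and ui: "u = nvec i" by blast
  have "convex hull (VN N lam - {vv N lam i}) \<in> Delta_plus N lam"
    unfolding Delta_plus_def using i by blast
  then show "u \<in> {u. \<exists>T\<in>Delta_plus N lam. upward_inner_normal N (Omega N T) u}"
    using nvec_normal[OF i] ui by blast
qed

lemma sum_e1: "j \<le> N + 1 \<Longrightarrow> (\<Sum>k=1..j-1. ebasis1 N k) m = (if 1 \<le> m \<and> m < j then 1 else 0)"
proof -
  assume j: "j \<le> N + 1"
  have "(\<Sum>k=1..j-1. ebasis1 N k) m = (\<Sum>k\<in>{1..j-1}. if k = m then 1 else 0)"
    unfolding sum_fun_apply using j by (intro sum.cong) (auto simp: ebasis1_apply)
  also have "\<dots> = (if 1 \<le> m \<and> m < j then 1 else 0)" by auto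
  finally show ?thesis .
qed

lemma nvec1_x: "nvec 1 = xvec N lam"
  by (auto simp: nvec_def xvec_def P_def)

lemma yvec_apply: "j \<le> N + 1 \<Longrightarrow> yvec N l j m = xvec N l m + (if 1 \<le> m \<and> m < j then 1 else 0)"
proof -
  assume j: "j \<le> N + 1"
  have "(\<Sum>k=1..j-1. ebasis1 N k) m = (if 1 \<le> m \<and> m < j then 1 else 0)" by (rule sum_e1[OF j])
  then show ?thesis by (simp only: yvec_def plus_fun_apply)
qed

lemma nvec_y: "j \<in> {2..N} \<Longrightarrow> lam 1 = 1 \<Longrightarrow> nvec j = yvec N lam j"
  by (rule ext) (auto simp: nvec_def yvec_apply xvec_def P_def)

lemma nvec1_x': "nvec 1 = sigma N (xvec N (\<lambda>i. - lam i))"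
  by (auto simp: nvec_def xvec_def P_def sigma_def sum_negf)

lemma nvec_y': "j \<in> {2..N} \<Longrightarrow> lam 1 = -1 \<Longrightarrow> nvec j = sigma N (yvec N (\<lambda>i. - lam i) j)"
  by (rule ext) (auto simp: nvec_def yvec_apply xvec_def P_def sigma_def sum_negf)

lemma img_split: "nvec ` {i \<in> {1..N}. lam i = lam 1} = {nvec 1} \<union> {nvec j | j. j \<in> {2..N} \<and> lam j = lam 1}"
proof -
  have "{i \<in> {1..N}. lam i = lam 1} = insert 1 {j. j \<in> {2..N} \<and> lam j = lam 1}" using N4 by auto
  then show ?thesis by auto
qed

end

theorem lemma5p4:
  fixes N :: nat and lam :: "nat \<Rightarrow> int"
  assumes "even N" and "N \<ge> 4" and "lam \<in> Lambda N"
  shows "(lam 1 = 1 \<longrightarrow>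
            {u. \<exists>T\<in>Delta_plus N lam. upward_inner_normal N (Omega N T) u}
              = {xvec N lam} \<union> {yvec N lam j | j. j \<in> {2..N} \<and> lam j = 1})
       \<and> (lam 1 = -1 \<longrightarrow>
            {u. \<exists>T\<in>Delta_plus N lam. upward_inner_normal N (Omega N T) u}
              = {sigma N (xvec N (\<lambda>i. - lam i))}
                \<union> {sigma N (yvec N (\<lambda>i. - lam i) j) | j. j \<in> {2..N} \<and> lam j < 0})"
proof -
  interpret L N lam using assms by unfold_locales
  have base: "{u. \<exists>T\<in>Delta_plus N lam. upward_inner_normal N (Omega N T) u}
      = {nvec 1} \<union> {nvec j | j. j \<in> {2..N} \<and> lam j = lam 1}"
    using lhs_eq img_split by simp
  show ?thesis
  proof (intro conjI impI)
    assume l1: "lam 1 = 1"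
    have "{nvec j | j. j \<in> {2..N} \<and> lam j = lam 1} = {yvec N lam j | j. j \<in> {2..N} \<and> lam j = 1}"
      using l1 nvec_y by (metis (no_types, lifting))
    then show "{u. \<exists>T\<in>Delta_plus N lam. upward_inner_normal N (Omega N T) u}
              = {xvec N lam} \<union> {yvec N lam j | j. j \<in> {2..N} \<and> lam j = 1}"
      using base nvec1_x by simp
  next
    assume l1: "lam 1 = -1"
    have eq: "j \<in> {2..N} \<Longrightarrow> (lam j = lam 1) = (lam j < 0)" for j
      using lam_pm[of j] l1 by auto
    have "{nvec j | j. j \<in> {2..N} \<and> lam j = lam 1} =
        {sigma N (yvec N (\<lambda>i. - lam i) j) | j. j \<in> {2..N} \<and> lam j < 0}"
    proof (intro set_eqI iffI)
      fix x assume "x \<in> {nvec j | j. j \<in> {2..N} \<and> lam j = lam 1}"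
      then obtain j where "x = nvec j" "j \<in> {2..N}" "lam j = lam 1" by blast
      then show "x \<in> {sigma N (yvec N (\<lambda>i. - lam i) j) | j. j \<in> {2..N} \<and> lam j < 0}"
        using nvec_y'[OF _ l1] eq by blast
    next
      fix x assume "x \<in> {sigma N (yvec N (\<lambda>i. - lam i) j) | j. j \<in> {2..N} \<and> lam j < 0}"
      then obtain j where j: "x = sigma N (yvec N (\<lambda>i. - lam i) j)" "j \<in> {2..N}" "lam j < 0" by blast
      then have "x = nvec j" using nvec_y'[OF _ l1, of j] by simp
      moreover have "lam j = lam 1" using eq[of j] j by simp
      ultimately show "x \<in> {nvec j | j. j \<in> {2..N} \<and> lam j = lam 1}" using j by blast
    qed
    then show "{u. \<exists>T\<in>Delta_plus N lam. upward_inner_normal N (Omega N T) u}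
              = {sigma N (xvec N (\<lambda>i. - lam i))}
                \<union> {sigma N (yvec N (\<lambda>i. - lam i) j) | j. j \<in> {2..N} \<and> lam j < 0}"
      using base nvec1_x' by simp
  qed
qed

end
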